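(* Let $S_X,S_Y$ be finite nonempty action sets and $\varphi:S_X\times S_Y\to\mathbb{R}$. Suppose $\sigma_X:\mathcal{H}\to\Delta(S_X)$ is a $(\varphi,1)$-autocratic behavioral strategy for $X$ of arbitrary memory. Then there exists a two-point reactive learning strategy for $X$ that is also $(\varphi,1)$-autocratic.
   Context: Two players $X,Y$ play a repeated game with finite action sets $S_X,S_Y$; $\Delta(S)$ denotes the probability distributions on $S$. $\varphi$ is extended to mixed actions in its first argument by $\varphi(\tau_X,s_Y)=\mathbb{E}_{s_X\sim\tau_X}[\varphi(s_X,s_Y)]$. Histories: $\mathcal{H}=\bigcup_{T\ge0}(S_X\times S_Y)^T$. A behavioral strategy for $X$ is a map $\sigma_X:\mathcal{H}\to\Delta(S_X)$, similarly for $Y$; in each round $t$ players independently draw actions from their strategies evaluated at the history of realized action pairs of rounds $0,\dots,t-1$, and $\mathbb{E}_{\sigma_X,\sigma_Y}$ is the expectation over the resulting play. $\sigma_X$ is $(\varphi,1)$-autocratic if for every behavioral strategy $\sigma_Y$ of $Y$ the Cesàro limit $\lim_{T\to\infty}\frac{1}{T+1}\sum_{t=0}^T\mathbb{E}_{\sigma_X,\sigma_Y}[\varphi(s_X^t,s_Y^t)]$ exists and equals $0$. A reactive learning strategy for $X$ is a pair $(\sigma_X^0,\sigma_X^* )$ with $\sigma_X^0\in\Delta(S_X)$ and $\sigma_X^*:\Delta(S_X)\times S_Y\to\Delta(S_X)$, played by using $\tau_X^0=\sigma_X^0$ in round $0$ and $\tau_X^{t+1}=\sigma_X^*[\tau_X^t,s_Y^t]$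 in round $t+1$, where $s_Y^t$ is $Y$'s realized action in round $t$. It is two-point if there exist $\tau_X^\pm\in\Delta(S_X)$, $p_0\in[0,1]$, $p^*:[0,1]\times S_Y\to[0,1]$ with $\sigma_X^0=p_0\tau_X^++(1-p_0)\tau_X^-$ and $\sigma_X^*[p\tau_X^++(1-p)\tau_X^-,s_Y]=p^*[p,s_Y]\tau_X^++(1-p^*[p,s_Y])\tau_X^-$ for all $p\in[0,1]$, $s_Y\in S_Y$. *)

theory Defs
  imports "HOL-Probability.Probability"
begin

text \<open>Histories: lists of realized action pairs, element t = round t.\<close>
type_synonym ('x, 'y) hist = "('x \<times> 'y) list"

type_synonym ('x, 'y) bstrat = "('x, 'y) hist \<Rightarrow> 'x pmf"

fun play :: "('x, 'y) bstrat \<Rightarrow> ('y, 'x) bstrat \<Rightarrow> nat \<Rightarrow> ('x, 'y) hist pmf" where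
  "play \<sigma>X \<sigma>Y 0 = return_pmf []"
| "play \<sigma>X \<sigma>Y (Suc t) =
     bind_pmf (play \<sigma>X \<sigma>Y t)
       (\<lambda>h. map_pmf (\<lambda>a. h @ [a])
              (pair_pmf (\<sigma>X h) (\<sigma>Y (map (\<lambda>(x, y). (y, x)) h))))"

definition stage_payoff ::
  "('x \<Rightarrow> 'y \<Rightarrow> real) \<Rightarrow> ('x, 'y) bstrat \<Rightarrow> ('y, 'x) bstrat \<Rightarrow> nat \<Rightarrow> real" where
  "stage_payoff \<phi> \<sigma>X \<sigma>Y t =
     measure_pmf.expectation (play \<sigma>X \<sigma>Y (Suc t)) (\<lambda>h. \<phi> (fst (h ! t)) (snd (h ! t)))"

definition autocratic :: "('x \<Rightarrow> 'y \<Rightarrow> real) \<Rightarrow> ('x, 'y) bstrat \<Rightarrow> bool" where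
  "autocratic \<phi> \<sigma>X \<longleftrightarrow>
     (\<forall>\<sigma>Y :: ('y, 'x) bstrat.
        (\<lambda>T. (\<Sum>t\<le>T. stage_payoff \<phi> \<sigma>X \<sigma>Y t) / real (T + 1)) \<longlonglongrightarrow> 0)"

definition reactive_strategy ::
  "'x pmf \<Rightarrow> ('x pmf \<Rightarrow> 'y \<Rightarrow> 'x pmf) \<Rightarrow> ('x, 'y) bstrat" where
  "reactive_strategy \<sigma>0 \<sigma>s h = foldl (\<lambda>\<tau> a. \<sigma>s \<tau> (snd a)) \<sigma>0 h"

definition mix :: "real \<Rightarrow> 'x pmf \<Rightarrow> 'x pmf \<Rightarrow> 'x pmf" where
  "mix p a b = bind_pmf (bernoulli_pmf p) (\<lambda>c. if c then a else b)"

definition two_point :: "'x pmf \<Rightarrow> ('x pmf \<Rightarrow> 'y \<Rightarrow> 'x pmf) \<Rightarrow> bool" where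
  "two_point \<sigma>0 \<sigma>s \<longleftrightarrow>
     (\<exists>\<tau>p \<tau>m p0 (pstar :: real \<Rightarrow> 'y \<Rightarrow> real).
        p0 \<in> {0..1} \<and>
        (\<forall>p\<in>{0..1}. \<forall>s. pstar p s \<in> {0..1}) \<and>
        \<sigma>0 = mix p0 \<tau>p \<tau>m \<and>
        (\<forall>p\<in>{0..1}. \<forall>s. \<sigma>s (mix p \<tau>p \<tau>m) s = mix (pstar p s) \<tau>p \<tau>m))"

end

theory Submission
  imports Defs
begin


lemma exp_finite:
  fixes p :: "'a::finite pmf"
  shows "measure_pmf.expectation p f = (\<Sum>x\<in>UNIV. pmf p x * f x)"
  by (subst integral_measure_pmf_real[where A=UNIV]) (auto simp: mult.commute)

lemma exp_pair:
  fixes p :: "'a::finite pmf" and q :: "'b::finite pmf"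
  shows "measure_pmf.expectation (pair_pmf p q) f = (\<Sum>x\<in>UNIV. \<Sum>y\<in>UNIV. pmf p x * pmf q y * f (x,y))"
  apply (simp add: exp_finite UNIV_Times_UNIV[symmetric] sum.cartesian_product del: UNIV_Times_UNIV)
  apply (rule sum.cong)
   apply (auto simp: pmf_pair)
  done

lemma play_set:
  fixes \<sigma>X :: "('x::finite, 'y::finite) bstrat"
  shows "finite (set_pmf (play \<sigma>X \<sigma>Y t)) \<and> (\<forall>h\<in>set_pmf (play \<sigma>X \<sigma>Y t). length h = t)"
proof (induction t)
  case 0 then show ?case by simp
next
  case (Suc t)
  have f: "finite (set_pmf (pair_pmf (\<sigma>X h) (\<sigma>Y h')))" for h h'
    by (rule finite_subset[OF subset_UNIV]) simp
  show ?case using Suc f by auto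
qed

lemma play_Suc_exp:
  fixes \<sigma>X :: "('x::finite, 'y::finite) bstrat"
  shows "measure_pmf.expectation (play \<sigma>X \<sigma>Y (Suc t)) F =
   (\<Sum>h\<in>set_pmf (play \<sigma>X \<sigma>Y t). pmf (play \<sigma>X \<sigma>Y t) h *
      (\<Sum>x\<in>UNIV. \<Sum>y\<in>UNIV. pmf (\<sigma>X h) x * pmf (\<sigma>Y (map (\<lambda>(x, y). (y, x)) h)) y * F (h @ [(x,y)])))"
proof -
  have f: "finite (set_pmf (map_pmf g (pair_pmf (\<sigma>X h) (\<sigma>Y h'))))" for h h' and g :: "'x \<times> 'y \<Rightarrow> ('x \<times> 'y) list"
    by (simp add: finite_subset[OF subset_UNIV])
  show ?thesis
    apply (simp only: play.simps)
    apply (subst pmf_expectation_bind[where A="set_pmf (play \<sigma>X \<sigma>Y t)"])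
    using play_set[of \<sigma>X \<sigma>Y t] f apply auto[3]
    apply (simp add: exp_pair)
    done
qed

lemma stage_eq:
  fixes \<sigma>X :: "('x::finite, 'y::finite) bstrat"
  shows "stage_payoff \<phi> \<sigma>X \<sigma>Y t =
   (\<Sum>h\<in>set_pmf (play \<sigma>X \<sigma>Y t). pmf (play \<sigma>X \<sigma>Y t) h *
      (\<Sum>x\<in>UNIV. \<Sum>y\<in>UNIV. pmf (\<sigma>X h) x * pmf (\<sigma>Y (map (\<lambda>(x, y). (y, x)) h)) y * \<phi> x y))"
  unfolding stage_payoff_def play_Suc_exp
  apply (rule sum.cong[OF refl])
  using play_set[of \<sigma>X \<sigma>Y t] by (simp add: nth_append)

lemma pmf_mix:
  assumes "0 \<le> p" "p \<le> 1"
  shows "pmf (mix p A B) x = p * pmf A x + (1 - p) * pmf B x"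
  unfolding mix_def pmf_bind using assms by (simp add: exp_finite UNIV_bool)

lemma mix_same: "mix p A A = A"
  unfolding mix_def by (simp only: if_cancel bind_pmf_const)

lemma mix_inj:
  assumes "p \<in> {0..1}" "q \<in> {0..1}" "mix p A B = mix q A B" "A \<noteq> B"
  shows "p = q"
proof -
  have "\<exists>x. pmf A x \<noteq> pmf B x"
  proof (rule ccontr)
    assume "\<not> (\<exists>x. pmf A x \<noteq> pmf B x)"
    then have "A = B" by (intro pmf_eqI) simp
    then show False using assms(4) by simp
  qed
  then obtain x where x: "pmf A x \<noteq> pmf B x" by blast
  have "p * pmf A x + (1 - p) * pmf B x = q * pmf A x + (1 - q) * pmf B x"
  proof -
    have "pmf (mix p A B) x = pmf (mix q A B) x" using assms(3) by simp
    then show ?thesis using assms(1,2) by (simp add: pmf_mix)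
  qed
  then have "(p - q) * (pmf A x - pmf B x) = 0" by (simp add: algebra_simps)
  then show ?thesis using x by simp
qed

lemma autocratic_neg:
  assumes "autocratic \<phi> \<sigma>X"
  shows "autocratic (\<lambda>x y. - \<phi> x y) \<sigma>X"
  unfolding autocratic_def
proof
  fix \<sigma>Y :: "('b, 'a) bstrat"
  have "(\<lambda>T. - ((\<Sum>t\<le>T. stage_payoff \<phi> \<sigma>X \<sigma>Y t) / real (T + 1))) \<longlonglongrightarrow> - 0"
    using assms unfolding autocratic_def by (intro tendsto_minus) blast
  moreover have "stage_payoff (\<lambda>x y. - \<phi> x y) \<sigma>X \<sigma>Y t = - stage_payoff \<phi> \<sigma>X \<sigma>Y t" for t
    by (simp add: stage_payoff_def)
  ultimately show "(\<lambda>T. (\<Sum>t\<le>T. stage_payoff (\<lambda>x y. - \<phi> x y) \<sigma>X \<sigma>Y t) / real (T + 1)) \<longlonglongrightarrow> 0"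
    by (simp add: sum_negf)
qed



lemma sep:
  fixes \<phi> :: "'x::finite \<Rightarrow> 'y::finite \<Rightarrow> real"
  assumes H: "\<forall>\<tau>::'x pmf. \<exists>y. (\<Sum>x\<in>UNIV. pmf \<tau> x * \<phi> x y) < 0"
  shows "\<exists>w. (\<forall>y. 0 \<le> w y) \<and> sum w UNIV = 1 \<and> (\<forall>x. (\<Sum>y\<in>UNIV. w y * \<phi> x y) < 0)"
proof -
  define D where "D = {q::real^'x. (\<forall>x. 0 \<le> q$x) \<and> (\<Sum>x\<in>UNIV. q$x) = 1}"
  define L where "L = (\<lambda>q::real^'x. \<chi> y::'y. \<Sum>x\<in>UNIV. q$x * \<phi> x y)"
  define S where "S = L ` D"
  define T where "T = {v::real^'y. \<forall>y. 0 \<le> v$y}"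
  have linL: "linear L"
    unfolding L_def by (rule linearI) (auto simp: vec_eq_iff sum.distrib sum_distrib_left algebra_simps)
  have convD: "convex D"
    unfolding D_def convex_def
    by (auto simp: sum.distrib sum_distrib_left[symmetric])
  have closedD: "closed D"
  proof -
    have "D = (\<Inter>x. {q. 0 \<le> q$x}) \<inter> {q. (\<Sum>x\<in>UNIV. q$x) = 1}" unfolding D_def by auto
    moreover have "closed {q::real^'x. 0 \<le> q$x}" for x
      by (intro closed_Collect_le continuous_intros)
    moreover have "closed {q::real^'x. (\<Sum>x\<in>UNIV. q$x) = 1}"
      by (intro closed_Collect_eq continuous_intros)
    ultimately show ?thesis by auto
  qed
  have boundedD: "bounded D"
  proof -
    have "norm q \<le> 1" if "q \<in> D" for q
    proof -
      have "norm q \<le> (\<Sum>x\<in>UNIV. \<bar>q$x\<bar>)" by (rule norm_le_l1_cart)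
      also have "\<dots> = 1" using that unfolding D_def by simp
      finally show ?thesis .
    qed
    then show ?thesis unfolding bounded_iff by blast
  qed
  have compS: "compact S"
    unfolding S_def
    by (intro compact_continuous_image linear_continuous_on linear_conv_bounded_linear[THEN iffD1] linL)
       (simp add: compact_eq_bounded_closed closedD boundedD)
  have convS: "convex S" unfolding S_def using convD linL by (rule convex_linear_image[rotated])
  obtain x0 :: 'x where True by blast
  have axD: "axis x 1 \<in> D" for x
    unfolding D_def by (auto simp: axis_def)
  have Lax: "L (axis x 1) $ y = \<phi> x y" for x y
    unfolding L_def by (simp add: axis_def of_bool_def[symmetric])
  have neS: "S \<noteq> {}" unfolding S_def using axD by blast
  have convT: "convex T" unfolding T_def convex_def by auto
  have closedT: "closed T"
  proof -
    have "T = (\<Inter>y. {v. 0 \<le> v$y})" unfolding T_def by auto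
    moreover have "closed {v::real^'y. 0 \<le> v$y}" for y
      by (intro closed_Collect_le continuous_intros)
    ultimately show ?thesis by auto
  qed
  have disj: "S \<inter> T = {}"
  proof (rule ccontr)
    assume "S \<inter> T \<noteq> {}"
    then obtain q where q: "q \<in> D" "L q \<in> T" unfolding S_def by auto
    have nn: "\<And>x. 0 \<le> q$x" and s1: "(\<Sum>x\<in>UNIV. q$x) = 1" using q(1) unfolding D_def by auto
    have prob: "(\<integral>\<^sup>+x. ennreal (q$x) \<partial>count_space UNIV) = 1"
      by (simp add: nn_integral_count_space_finite sum_ennreal nn s1)
    define \<tau> where "\<tau> = embed_pmf (\<lambda>x. q$x)"
    have p\<tau>: "pmf \<tau> x = q$x" for x
      unfolding \<tau>_def using pmf_embed_pmf[of "\<lambda>x. q$x"] nn prob by blast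
    obtain y where "(\<Sum>x\<in>UNIV. pmf \<tau> x * \<phi> x y) < 0" using H by blast
    moreover have "0 \<le> L q $ y" using q(2) unfolding T_def by auto
    ultimately show False unfolding L_def p\<tau> by simp
  qed
  obtain a b where ab: "\<forall>v\<in>S. inner a v < b" "\<forall>u\<in>T. inner a u > b"
    using separating_hyperplane_compact_closed[OF convS compS neS convT closedT disj] by blast
  have "0 \<in> T" unfolding T_def by simp
  then have "inner a 0 > b" using ab(2) by blast
  then have b0: "b < 0" by simp
  have anonneg: "0 \<le> a$y" for y
  proof (rule ccontr)
    assume "\<not> 0 \<le> a$y"
    then have ay: "a$y < 0" by simp
    define t where "t = (b - 1) / a$y"
    have "t \<ge> 0" unfolding t_def using ay b0 by (simp add: divide_nonpos_neg)
    then have "axis y t \<in> T" unfolding T_def by (simp add: axis_def)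
    then have "inner a (axis y t) > b" using ab(2) by blast
    moreover have "inner a (axis y t) = b - 1" unfolding inner_axis t_def using ay by simp
    ultimately show False by simp
  qed
  have key: "(\<Sum>y\<in>UNIV. a$y * \<phi> x y) < b" for x
  proof -
    have "L (axis x 1) \<in> S" unfolding S_def using axD by blast
    then have "inner a (L (axis x 1)) < b" using ab(1) by blast
    then show ?thesis by (simp add: inner_vec_def Lax)
  qed
  define s where "s = (\<Sum>y\<in>UNIV. a$y)"
  have s0: "s > 0"
  proof (rule ccontr)
    assume "\<not> s > 0"
    then have "s = 0" using anonneg unfolding s_def by (meson not_less sum_nonneg order.antisym)
    then have "\<forall>y\<in>UNIV. a$y = 0" unfolding s_def using anonneg by (subst sum_nonneg_eq_0_iff[symmetric]) auto
    then have "(\<Sum>y\<in>UNIV. a$y * \<phi> x0 y) = 0" by simp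
    then show False using key[of x0] b0 by simp
  qed
  define w where "w y = a$y / s" for y
  have "(\<Sum>y\<in>UNIV. w y * \<phi> x y) < 0" for x
  proof -
    have "(\<Sum>y\<in>UNIV. w y * \<phi> x y) = (\<Sum>y\<in>UNIV. a$y * \<phi> x y) / s"
      unfolding w_def by (simp add: sum_divide_distrib)
    then show ?thesis using key[of x] b0 s0 by (simp add: divide_neg_pos)
  qed
  moreover have "sum w UNIV = 1" unfolding w_def using s0 by (simp add: sum_divide_distrib[symmetric] s_def)
  moreover have "\<forall>y. 0 \<le> w y" unfolding w_def using anonneg s0 by simp
  ultimately show ?thesis by blast
qed



lemma exists_good:
  fixes \<phi> :: "'x::finite \<Rightarrow> 'y::finite \<Rightarrow> real" and \<sigma>X :: "('x,'y) bstrat"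
  assumes "autocratic \<phi> \<sigma>X"
  shows "\<exists>\<tau>::'x pmf. \<forall>y. 0 \<le> (\<Sum>x\<in>UNIV. pmf \<tau> x * \<phi> x y)"
proof (rule ccontr)
  assume "\<not> ?thesis"
  then have "\<forall>\<tau>::'x pmf. \<exists>y. (\<Sum>x\<in>UNIV. pmf \<tau> x * \<phi> x y) < 0" by (auto simp: not_le)
  from sep[OF this] obtain w where w: "\<forall>y. 0 \<le> w y" "sum w UNIV = 1" "\<forall>x. (\<Sum>y\<in>UNIV. w y * \<phi> x y) < 0"
    by blast
  have prob: "(\<integral>\<^sup>+y. ennreal (w y) \<partial>count_space UNIV) = 1"
    by (simp add: nn_integral_count_space_finite sum_ennreal w)
  define \<rho> where "\<rho> = embed_pmf w"
  have p\<rho>: "pmf \<rho> y = w y" for y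
    unfolding \<rho>_def using pmf_embed_pmf[of w] w(1) prob by blast
  define \<sigma>Y :: "('y,'x) bstrat" where "\<sigma>Y = (\<lambda>_. \<rho>)"
  define m where "m = Max (range (\<lambda>x. \<Sum>y\<in>UNIV. w y * \<phi> x y))"
  have m0: "m < 0" unfolding m_def using w(3) by (subst Max_less_iff) auto
  have mx: "(\<Sum>y\<in>UNIV. w y * \<phi> x y) \<le> m" for x unfolding m_def by (rule Max_ge) auto
  have st: "stage_payoff \<phi> \<sigma>X \<sigma>Y t \<le> m" for t
  proof -
    have inner: "(\<Sum>x\<in>UNIV. \<Sum>y\<in>UNIV. pmf (\<sigma>X h) x * pmf (\<sigma>Y hh) y * \<phi> x y) \<le> m" for h hh
    proof -
      have "(\<Sum>x\<in>UNIV. \<Sum>y\<in>UNIV. pmf (\<sigma>X h) x * pmf (\<sigma>Y hh) y * \<phi> x y)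
          = (\<Sum>x\<in>UNIV. pmf (\<sigma>X h) x * (\<Sum>y\<in>UNIV. w y * \<phi> x y))"
        by (simp add: \<sigma>Y_def p\<rho> sum_distrib_left mult.assoc)
      also have "\<dots> \<le> (\<Sum>x\<in>UNIV. pmf (\<sigma>X h) x * m)" by (intro sum_mono mult_left_mono mx) simp
      also have "\<dots> = m" by (simp add: sum_distrib_right[symmetric] sum_pmf_eq_1)
      finally show ?thesis .
    qed
    have "stage_payoff \<phi> \<sigma>X \<sigma>Y t \<le> (\<Sum>h\<in>set_pmf (play \<sigma>X \<sigma>Y t). pmf (play \<sigma>X \<sigma>Y t) h * m)"
      unfolding stage_eq by (intro sum_mono mult_left_mono inner) simp
    also have "\<dots> = m" using play_set[of \<sigma>X \<sigma>Y t]
      by (simp add: sum_distrib_right[symmetric] sum_pmf_eq_1)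
    finally show ?thesis .
  qed
  have avg: "(\<Sum>t\<le>T. stage_payoff \<phi> \<sigma>X \<sigma>Y t) / real (T+1) \<le> m" for T
  proof -
    have "(\<Sum>t\<le>T. stage_payoff \<phi> \<sigma>X \<sigma>Y t) \<le> (\<Sum>t\<le>T. m)" by (intro sum_mono st)
    then show ?thesis by (simp add: divide_le_eq algebra_simps)
  qed
  have lim: "(\<lambda>T. (\<Sum>t\<le>T. stage_payoff \<phi> \<sigma>X \<sigma>Y t) / real (T+1)) \<longlonglongrightarrow> 0"
    using assms unfolding autocratic_def by blast
  have "0 \<le> m" using LIMSEQ_le_const2[OF lim] avg by blast
  with m0 show False by simp
qed



theorem theorem3:
  fixes \<phi> :: "'x::finite \<Rightarrow> 'y::finite \<Rightarrow> real"
    and \<sigma>X :: "('x, 'y) bstrat"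
  assumes "autocratic \<phi> \<sigma>X"
  shows "\<exists>\<sigma>0 (\<sigma>s :: 'x pmf \<Rightarrow> 'y \<Rightarrow> 'x pmf).
           two_point \<sigma>0 \<sigma>s \<and> autocratic \<phi> (reactive_strategy \<sigma>0 \<sigma>s)"
proof -
  obtain \<tau>p :: "'x pmf" where ha: "\<forall>y. 0 \<le> (\<Sum>x\<in>UNIV. pmf \<tau>p x * \<phi> x y)"
    using exists_good[OF assms] by blast
  obtain \<tau>m :: "'x pmf" where hb: "\<forall>y. 0 \<le> (\<Sum>x\<in>UNIV. pmf \<tau>m x * - \<phi> x y)"
    using exists_good[OF autocratic_neg[OF assms]] by blast
  define a where "a y = (\<Sum>x\<in>UNIV. pmf \<tau>p x * \<phi> x y)" for y
  define b where "b y = (\<Sum>x\<in>UNIV. pmf \<tau>m x * \<phi> x y)" for y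
  have a0: "0 \<le> a y" for y using ha unfolding a_def by blast
  have b0: "b y \<le> 0" for y using hb[rule_format, of y] unfolding b_def by (simp add: sum_negf)
  define K where "K = 1 + (\<Sum>y\<in>UNIV. a y - b y)"
  have nn: "0 \<le> a y - b y" for y using a0[of y] b0[of y] by linarith
  have abK: "a y - b y \<le> K - 1" for y
    unfolding K_def using member_le_sum[of y UNIV "\<lambda>y. a y - b y"] nn by simp
  have K1: "K \<ge> 1" unfolding K_def using nn by (simp add: sum_nonneg)
  define \<eta> where "\<eta> = 1 / K"
  have \<eta>0: "\<eta> > 0" unfolding \<eta>_def using K1 by simp
  have \<eta>a: "\<eta> * a y \<le> 1" for y
  proof -
    have "a y \<le> K" using abK[of y] b0[of y] by simp
    then show ?thesis unfolding \<eta>_def using K1 by (simp add: divide_le_eq)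
  qed
  have \<eta>b: "\<eta> * (- b y) \<le> 1" for y
  proof -
    have "- b y \<le> K" using abK[of y] a0[of y] by simp
    then show ?thesis unfolding \<eta>_def using K1 by (simp add: le_divide_eq divide_le_eq)
  qed
  define ps where "ps p s = p - \<eta> * (p * a s + (1 - p) * b s)" for p s
  have ps01: "ps p s \<in> {0..1}" if "p \<in> {0..1}" for p s
  proof -
    have e: "ps p s = p * (1 - \<eta> * a s) + (1 - p) * (\<eta> * (- b s))"
      unfolding ps_def by (simp add: algebra_simps)
    have c1: "0 \<le> 1 - \<eta> * a s" "1 - \<eta> * a s \<le> 1" using \<eta>a[of s] \<eta>0 a0[of s] by auto
    have c2: "0 \<le> \<eta> * (- b s)" "\<eta> * (- b s) \<le> 1" using \<eta>b[of s] \<eta>0 b0[of s] by (auto simp: mult_nonneg_nonpos)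
    have p: "0 \<le> p" "p \<le> 1" using that by auto
    have n1: "0 \<le> p * (1 - \<eta> * a s)" by (rule mult_nonneg_nonneg) (use c1 p in auto)
    have n2: "0 \<le> (1 - p) * (\<eta> * (- b s))" by (rule mult_nonneg_nonneg) (use c2 p in auto)
    have "0 \<le> ps p s" unfolding e using n1 n2 by linarith
    moreover have "p * (1 - \<eta> * a s) \<le> p * 1" by (rule mult_left_mono) (use c1 p in auto)
    moreover have "(1 - p) * (\<eta> * (- b s)) \<le> (1 - p) * 1" by (rule mult_left_mono) (use c2 p in auto)
    ultimately show ?thesis unfolding e by auto
  qed
  define pof where "pof \<tau> = (SOME p. p \<in> {0..1} \<and> \<tau> = mix p \<tau>p \<tau>m)" for \<tau>
  define \<sigma>s where "\<sigma>s \<tau> s = mix (ps (pof \<tau>) s) \<tau>p \<tau>m" for \<tau> s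
  define \<sigma>0 where "\<sigma>0 = mix 0 \<tau>p \<tau>m"
  have \<sigma>s_mix: "\<sigma>s (mix p \<tau>p \<tau>m) s = mix (ps p s) \<tau>p \<tau>m" if "p \<in> {0..1}" for p s
  proof -
    let ?q = "pof (mix p \<tau>p \<tau>m)"
    have q: "?q \<in> {0..1} \<and> mix p \<tau>p \<tau>m = mix ?q \<tau>p \<tau>m"
      unfolding pof_def by (rule someI[of _ p]) (use that in auto)
    show ?thesis
    proof (cases "\<tau>p = \<tau>m")
      case True then show ?thesis by (simp add: \<sigma>s_def mix_same)
    next
      case False
      then have "p = ?q" using mix_inj[of p ?q \<tau>p \<tau>m] q that by auto
      then show ?thesis by (simp add: \<sigma>s_def)
    qed
  qed
  have tp: "two_point \<sigma>0 \<sigma>s"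
    unfolding two_point_def
    apply (rule exI[of _ \<tau>p], rule exI[of _ \<tau>m], rule exI[of _ 0], rule exI[of _ ps])
    using ps01 \<sigma>s_mix by (auto simp: \<sigma>0_def)
  define P where "P h = foldl (\<lambda>p a. ps p (snd a)) 0 h" for h :: "('x \<times> 'y) list"
  have fold: "\<forall>p\<in>{0..1}. foldl (\<lambda>\<tau> a. \<sigma>s \<tau> (snd a)) (mix p \<tau>p \<tau>m) h
      = mix (foldl (\<lambda>p a. ps p (snd a)) p h) \<tau>p \<tau>m \<and> foldl (\<lambda>p a. ps p (snd a)) p h \<in> {0..1}"
    for h :: "('x \<times> 'y) list"
  proof (induction h)
    case Nil then show ?case by simp
  next
    case (Cons c h)
    show ?case
    proof
      fix p :: real assume p: "p \<in> {0..1}"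
      have "ps p (snd c) \<in> {0..1}" using ps01 p by blast
      then show "foldl (\<lambda>\<tau> a. \<sigma>s \<tau> (snd a)) (mix p \<tau>p \<tau>m) (c # h)
          = mix (foldl (\<lambda>p a. ps p (snd a)) p (c # h)) \<tau>p \<tau>m \<and> foldl (\<lambda>p a. ps p (snd a)) p (c # h) \<in> {0..1}"
        using Cons.IH p by (simp add: \<sigma>s_mix)
    qed
  qed
  have RS: "reactive_strategy \<sigma>0 \<sigma>s h = mix (P h) \<tau>p \<tau>m" and P01: "P h \<in> {0..1}" for h
    using fold[of h] unfolding reactive_strategy_def P_def \<sigma>0_def by auto
  have Papp: "P (h @ [(x,y)]) = ps (P h) y" for h x y by (simp add: P_def)
  have pmfRS: "pmf (reactive_strategy \<sigma>0 \<sigma>s h) x = P h * pmf \<tau>p x + (1 - P h) * pmf \<tau>m x" for h x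
    unfolding RS using P01[of h] by (simp add: pmf_mix)
  have aut: "autocratic \<phi> (reactive_strategy \<sigma>0 \<sigma>s)"
    unfolding autocratic_def
  proof
    fix \<sigma>Y :: "('y, 'x) bstrat"
    define X where "X = reactive_strategy \<sigma>0 \<sigma>s"
    define Q where "Q t = measure_pmf.expectation (play X \<sigma>Y t) P" for t
    have Qsum: "Q t = (\<Sum>h\<in>set_pmf (play X \<sigma>Y t). pmf (play X \<sigma>Y t) h * P h)" for t
      unfolding Q_def using play_set[of X \<sigma>Y t]
      by (subst integral_measure_pmf_real[where A="set_pmf (play X \<sigma>Y t)"]) (auto simp: mult.commute)
    have Q01: "0 \<le> Q t \<and> Q t \<le> 1" for t
    proof -
      have "0 \<le> Q t" unfolding Qsum using P01 by (intro sum_nonneg mult_nonneg_nonneg) auto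
      moreover have "Q t \<le> (\<Sum>h\<in>set_pmf (play X \<sigma>Y t). pmf (play X \<sigma>Y t) h * 1)"
        unfolding Qsum using P01 by (intro sum_mono mult_left_mono) auto
      moreover have "(\<Sum>h\<in>set_pmf (play X \<sigma>Y t). pmf (play X \<sigma>Y t) h * 1) = 1"
        using play_set[of X \<sigma>Y t] by (simp add: sum_pmf_eq_1)
      ultimately show ?thesis by simp
    qed
    have perh: "(\<Sum>x\<in>UNIV. \<Sum>y\<in>UNIV. pmf (X h) x * pmf R y * P (h @ [(x,y)]))
       = P h - \<eta> * (\<Sum>x\<in>UNIV. \<Sum>y\<in>UNIV. pmf (X h) x * pmf R y * \<phi> x y)" for h and R :: "'y pmf"
    proof -
      define p where "p = P h"
      define G where "G y = p * a y + (1 - p) * b y" for y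
      have g: "(\<Sum>x\<in>UNIV. pmf (X h) x * \<phi> x y) = G y" for y
        unfolding X_def pmfRS G_def a_def b_def p_def
        by (simp add: distrib_right sum.distrib sum_distrib_left mult.assoc)
      have sX: "(\<Sum>x\<in>UNIV. pmf (X h) x) = 1" and sR: "(\<Sum>y\<in>UNIV. pmf R y) = 1"
        by (simp_all add: sum_pmf_eq_1)
      have inner: "(\<Sum>y\<in>UNIV. pmf R y * (p - \<eta> * G y)) = p - \<eta> * (\<Sum>y\<in>UNIV. pmf R y * G y)"
      proof -
        have "(\<Sum>y\<in>UNIV. pmf R y * (p - \<eta> * G y)) = (\<Sum>y\<in>UNIV. pmf R y) * p - \<eta> * (\<Sum>y\<in>UNIV. pmf R y * G y)"
          by (simp add: right_diff_distrib sum_subtractf sum_distrib_left sum_distrib_right mult_ac)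
        then show ?thesis using sR by simp
      qed
      have "(\<Sum>x\<in>UNIV. \<Sum>y\<in>UNIV. pmf (X h) x * pmf R y * P (h @ [(x,y)]))
          = (\<Sum>x\<in>UNIV. pmf (X h) x * (\<Sum>y\<in>UNIV. pmf R y * (p - \<eta> * G y)))"
        unfolding Papp ps_def G_def p_def by (simp add: sum_distrib_left mult_ac)
      also have "\<dots> = (\<Sum>x\<in>UNIV. pmf (X h) x) * (p - \<eta> * (\<Sum>y\<in>UNIV. pmf R y * G y))"
        unfolding inner by (simp add: sum_distrib_right)
      also have "\<dots> = p - \<eta> * (\<Sum>y\<in>UNIV. pmf R y * G y)" using sX by simp
      also have "(\<Sum>y\<in>UNIV. pmf R y * G y) = (\<Sum>y\<in>UNIV. \<Sum>x\<in>UNIV. pmf (X h) x * pmf R y * \<phi> x y)"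
        unfolding g[symmetric] by (simp add: sum_distrib_left mult_ac)
      also have "\<dots> = (\<Sum>x\<in>UNIV. \<Sum>y\<in>UNIV. pmf (X h) x * pmf R y * \<phi> x y)"
        by (rule sum.swap)
      finally show ?thesis unfolding p_def .
    qed
    have step: "Q (Suc t) = Q t - \<eta> * stage_payoff \<phi> X \<sigma>Y t" for t
      unfolding Q_def[of "Suc t"] play_Suc_exp stage_eq perh Qsum[of t]
      by (simp add: right_diff_distrib sum_subtractf sum_distrib_left mult_ac)
    have st: "stage_payoff \<phi> X \<sigma>Y t = (Q t - Q (Suc t)) / \<eta>" for t
      using step[of t] \<eta>0 by (simp add: field_simps)
    have tel: "(\<Sum>t\<le>T. stage_payoff \<phi> X \<sigma>Y t) = (Q 0 - Q (Suc T)) / \<eta>" for T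
      unfolding st by (simp add: sum_divide_distrib[symmetric] sum_telescope)
    show "(\<lambda>T. (\<Sum>t\<le>T. stage_payoff \<phi> X \<sigma>Y t) / real (T + 1)) \<longlonglongrightarrow> 0"
    proof (rule Lim_null_comparison)
      show "(\<lambda>T. (1 / \<eta>) * inverse (real (Suc T))) \<longlonglongrightarrow> 0"
        by (rule tendsto_mult_right_zero[OF LIMSEQ_inverse_real_of_nat])
      show "\<forall>\<^sub>F T in sequentially. norm ((\<Sum>t\<le>T. stage_payoff \<phi> X \<sigma>Y t) / real (T + 1))
              \<le> (1 / \<eta>) * inverse (real (Suc T))"
      proof (rule always_eventually, rule allI)
        fix T
        have "\<bar>Q 0 - Q (Suc T)\<bar> \<le> 1" using Q01[of 0] Q01[of "Suc T"] by auto
        then have "\<bar>Q 0 - Q (Suc T)\<bar> / \<eta> \<le> 1 / \<eta>" using \<eta>0 by (simp add: divide_right_mono)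
        then have "\<bar>Q 0 - Q (Suc T)\<bar> / \<eta> / real (Suc T) \<le> 1 / \<eta> / real (Suc T)"
          by (rule divide_right_mono) simp
        moreover have "norm ((Q 0 - Q (Suc T)) / \<eta> / real (T + 1)) = \<bar>Q 0 - Q (Suc T)\<bar> / \<eta> / real (Suc T)"
          using \<eta>0 by (simp add: abs_divide)
        moreover have "1 / \<eta> / real (Suc T) = (1 / \<eta>) * inverse (real (Suc T))"
          by (simp add: divide_inverse)
        ultimately show "norm ((\<Sum>t\<le>T. stage_payoff \<phi> X \<sigma>Y t) / real (T + 1))
              \<le> (1 / \<eta>) * inverse (real (Suc T))"
          unfolding tel by linarith
      qed
    qed
  qed
  show ?thesis using tp aut by blast
qed


end
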